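(* Let $m_1,m_2\in\mathcal M$. The class of functions $$\mathscr F(m_1,m_2)=\Big\{(w,y)\mapsto \frac{r_{\gamma_2(w)}(y)}{r_{\gamma_1(w)}(y)}:\ \gamma_1\in\Gamma_{m_1},\ \gamma_2\in\Gamma_{m_2}\Big\}$$ on $\mathscr W\times\mathscr Y$ is a VC-subgraph class with VC dimension at most $2|m_1\vee m_2|+1$.
   Context: $I\subset\mathbb R$ is an interval with nonempty interior; $r_\gamma(y)=\exp(u(\gamma)T(y)-A(\gamma))$ for $\gamma\in I$, $y\in\mathscr Y$, where $T$ is a real measurable function on $\mathscr Y$, $u$ is continuous strictly monotone on $I$, and $A(\gamma)=\log\int e^{u(\gamma)T}d\nu<\infty$ for a measure $\nu$ on $\mathscr Y$. $\mathcal M$ is a set of partitions of $\mathscr W$ into finitely many measurable sets; $|m|$ is the number of sets of $m$; $m_1\vee m_2=\{K_1\cap K_2: K_1\in m_1,K_2\in m_2,K_1\cap K_2\neq\emptyset\}$. For $m\in\mathcal M$, $\Gamma_m$ is a collection of functions $\mathscr W\to I$ that are constant on each set of $m$. *)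

theory Defs
  imports "HOL-Analysis.Analysis"
begin

definition shatters :: "'a set set \<Rightarrow> 'a set \<Rightarrow> bool" where
  "shatters C S \<longleftrightarrow> (\<forall>T \<subseteq> S. \<exists>B \<in> C. B \<inter> S = T)"

definition vc_dim_le :: "'a set set \<Rightarrow> nat \<Rightarrow> bool" where
  "vc_dim_le C V \<longleftrightarrow> (\<forall>S. finite S \<and> shatters C S \<longrightarrow> card S \<le> V)"

definition subgraph :: "'a set \<Rightarrow> ('a \<Rightarrow> real) \<Rightarrow> ('a \<times> real) set" where
  "subgraph D f = {(x, t). x \<in> D \<and> t < f x}"

definition vc_subgraph_dim_le :: "'a set \<Rightarrow> ('a \<Rightarrow> real) set \<Rightarrow> nat \<Rightarrow> bool" where
  "vc_subgraph_dim_le D F V \<longleftrightarrow> vc_dim_le (subgraph D ` F) V"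

definition is_partition :: "'w measure \<Rightarrow> 'w set set \<Rightarrow> bool" where
  "is_partition M m \<longleftrightarrow> finite m \<and> (\<forall>K \<in> m. K \<noteq> {} \<and> K \<in> sets M)
     \<and> \<Union>m = space M \<and> disjoint m"

definition join :: "'w set set \<Rightarrow> 'w set set \<Rightarrow> 'w set set" where
  "join m1 m2 = {K1 \<inter> K2 | K1 K2. K1 \<in> m1 \<and> K2 \<in> m2 \<and> K1 \<inter> K2 \<noteq> {}}"

definition logA :: "'y measure \<Rightarrow> ('y \<Rightarrow> real) \<Rightarrow> (real \<Rightarrow> real) \<Rightarrow> real \<Rightarrow> real" where
  "logA \<nu> T u \<gamma> = ln (enn2real (\<integral>\<^sup>+ y. ennreal (exp (u \<gamma> * T y)) \<partial>\<nu>))"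

definition rdens :: "'y measure \<Rightarrow> ('y \<Rightarrow> real) \<Rightarrow> (real \<Rightarrow> real) \<Rightarrow> real \<Rightarrow> 'y \<Rightarrow> real" where
  "rdens \<nu> T u \<gamma> y = exp (u \<gamma> * T y - logA \<nu> T u \<gamma>)"

end

theory Submission
  imports Defs
begin

lemma three_elems:
  assumes "3 \<le> card A"
  shows "\<exists>a b c. a \<in> A \<and> b \<in> A \<and> c \<in> A \<and> a \<noteq> b \<and> a \<noteq> c \<and> b \<noteq> c"
proof -
  obtain B where "B \<subseteq> A" "card B = 3" using obtain_subset_with_card_n[OF assms] by blast
  then obtain x y z where "B = {x,y,z}" "x \<noteq> y" "y \<noteq> z" "x \<noteq> z" using card_3_iff by metis
  thus ?thesis using \<open>B \<subseteq> A\<close> by blast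
qed

lemma three_pts:
  fixes s1 s2 s3 z1 z2 z3 :: real
  assumes H: "\<And>b1 b2 b3. \<exists>a c. (z1 < a* s1+c \<longleftrightarrow> b1) \<and> (z2 < a* s2+c \<longleftrightarrow> b2) \<and> (z3 < a* s3+c \<longleftrightarrow> b3)"
  shows False
proof (cases "s1 = s2 \<and> s2 = s3")
  case True
  obtain a c where 1: "z1 < a* s1+c" "\<not> z2 < a* s2+c" using H[of True False False] by blast
  obtain a' c' where 2: "\<not> z1 < a'* s1+c'" "z2 < a'* s2+c'" using H[of False True False] by blast
  from 1 2 True show False by auto
next
  case False
  define m1 where "m1 = s2 - s3"
  define m2 where "m2 = s3 - s1"
  define m3 where "m3 = s1 - s2"
  have nz: "m1 \<noteq> 0 \<or> m2 \<noteq> 0 \<or> m3 \<noteq> 0" using False unfolding m1_def m2_def m3_def by auto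
  have sum0: "m1 + m2 + m3 = 0" unfolding m1_def m2_def m3_def by simp
  have id: "\<And>a c. m1*(z1 - a* s1 - c) + m2*(z2 - a* s2 - c) + m3*(z3 - a* s3 - c) = m1* z1+m2* z2+m3* z3"
    unfolding m1_def m2_def m3_def by (simp add: algebra_simps)
  define d where "d = m1* z1+m2* z2+m3* z3"
  show False
  proof (cases "d \<ge> 0")
    case True
    obtain a c where ac: "(z1 < a* s1+c \<longleftrightarrow> m1 > 0)" "(z2 < a* s2+c \<longleftrightarrow> m2 > 0)" "(z3 < a* s3+c \<longleftrightarrow> m3 > 0)"
      using H[of "m1 > 0" "m2 > 0" "m3 > 0"] by blast
    have t: "\<And>m z s. (z < a* s+c \<longleftrightarrow> m > 0) \<Longrightarrow> m*(z - a* s - c) \<le> 0 \<and> (m > 0 \<longrightarrow> m*(z - a* s - c) < 0)"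
    proof -
      fix m z s assume "(z < a* s+c \<longleftrightarrow> (m::real) > 0)"
      thus "m*(z - a* s - c) \<le> 0 \<and> (m > 0 \<longrightarrow> m*(z - a* s - c) < 0)"
        proof (cases "m > 0")
        case True
        then have "z - a * s - c < 0" using \<open>(z < a * s+c \<longleftrightarrow> (m::real) > 0)\<close> by simp
        then have "m * (z - a * s - c) < 0" using True by (simp add: mult_pos_neg)
        then show ?thesis by simp
      next
        case False
        then have "z - a * s - c \<ge> 0" using \<open>(z < a * s+c \<longleftrightarrow> (m::real) > 0)\<close> by simp
        then show ?thesis using False by (simp add: mult_nonpos_nonneg)
      qed
    qed
    have pos: "m1 > 0 \<or> m2 > 0 \<or> m3 > 0" using nz sum0 by linarith
    have "m1*(z1 - a* s1 - c) + m2*(z2 - a* s2 - c) + m3*(z3 - a* s3 - c) < 0"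
      using t[OF ac(1)] t[OF ac(2)] t[OF ac(3)] pos by linarith
    with id True d_def show False by simp
  next
    case False
    obtain a c where ac: "(z1 < a* s1+c \<longleftrightarrow> m1 < 0)" "(z2 < a* s2+c \<longleftrightarrow> m2 < 0)" "(z3 < a* s3+c \<longleftrightarrow> m3 < 0)"
      using H[of "m1 < 0" "m2 < 0" "m3 < 0"] by blast
    have t: "\<And>m z s. (z < a* s+c \<longleftrightarrow> m < 0) \<Longrightarrow> m*(z - a* s - c) \<ge> 0 \<and> (m < 0 \<longrightarrow> m*(z - a* s - c) > 0)"
    proof -
      fix m z s assume "(z < a* s+c \<longleftrightarrow> (m::real) < 0)"
      thus "m*(z - a* s - c) \<ge> 0 \<and> (m < 0 \<longrightarrow> m*(z - a* s - c) > 0)"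
        proof (cases "m < 0")
        case True
        then have "z - a * s - c < 0" using \<open>(z < a * s+c \<longleftrightarrow> (m::real) < 0)\<close> by simp
        then have "m * (z - a * s - c) > 0" using True by (simp add: mult_neg_neg)
        then show ?thesis by simp
      next
        case False
        then have "z - a * s - c \<ge> 0" using \<open>(z < a * s+c \<longleftrightarrow> (m::real) < 0)\<close> by simp
        then show ?thesis using False by simp
      qed
    qed
    have neg: "m1 < 0 \<or> m2 < 0 \<or> m3 < 0" using nz sum0 by linarith
    have "m1*(z1 - a* s1 - c) + m2*(z2 - a* s2 - c) + m3*(z3 - a* s3 - c) > 0"
      using t[OF ac(1)] t[OF ac(2)] t[OF ac(3)] neg by linarith
    with id False d_def show False by simp
  qed
qed


theorem mainTheorem3:
  fixes I :: "real set" and u :: "real \<Rightarrow> real" and T :: "'y \<Rightarrow> real"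
    and \<nu> :: "'y measure" and MW :: "'w measure"
    and \<M> :: "'w set set set" and \<Gamma> :: "'w set set \<Rightarrow> ('w \<Rightarrow> real) set"
    and m1 m2 :: "'w set set"
  assumes "is_interval I" and "interior I \<noteq> {}"
    and "T \<in> borel_measurable \<nu>"
    and "continuous_on I u" and "strict_mono_on I u \<or> strict_antimono_on I u"
    and "\<forall>\<gamma>\<in>I. (\<integral>\<^sup>+ y. ennreal (exp (u \<gamma> * T y)) \<partial>\<nu>) < \<infinity>"
    and "\<forall>m\<in>\<M>. is_partition MW m"
    and "\<forall>m\<in>\<M>. \<forall>\<gamma>\<in>\<Gamma> m. (\<forall>w\<in>space MW. \<gamma> w \<in> I)
            \<and> (\<forall>K\<in>m. \<forall>w\<in>K. \<forall>w'\<in>K. \<gamma> w = \<gamma> w')"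
    and "m1 \<in> \<M>" and "m2 \<in> \<M>"
  shows "vc_subgraph_dim_le (space MW \<times> space \<nu>)
           {(\<lambda>(w, y). rdens \<nu> T u (\<gamma>2 w) y / rdens \<nu> T u (\<gamma>1 w) y) | \<gamma>1 \<gamma>2.
              \<gamma>1 \<in> \<Gamma> m1 \<and> \<gamma>2 \<in> \<Gamma> m2}
           (2 * card (join m1 m2) + 1)"
proof -
  let ?D = "space MW \<times> space \<nu>"
  let ?F = "{(\<lambda>(w, y). rdens \<nu> T u (\<gamma>2 w) y / rdens \<nu> T u (\<gamma>1 w) y) | \<gamma>1 \<gamma>2.
              \<gamma>1 \<in> \<Gamma> m1 \<and> \<gamma>2 \<in> \<Gamma> m2}"
  let ?J = "join m1 m2"
  have P1: "is_partition MW m1" and P2: "is_partition MW m2" using assms(7,9,10) by auto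
  have G1: "\<And>\<gamma>. \<gamma> \<in> \<Gamma> m1 \<Longrightarrow> \<forall>K\<in>m1. \<forall>w\<in>K. \<forall>w'\<in>K. \<gamma> w = \<gamma> w'" using assms(8,9) by blast
  have G2: "\<And>\<gamma>. \<gamma> \<in> \<Gamma> m2 \<Longrightarrow> \<forall>K\<in>m2. \<forall>w\<in>K. \<forall>w'\<in>K. \<gamma> w = \<gamma> w'" using assms(8,10) by blast
  have finJ: "finite ?J"
  proof -
    have "?J \<subseteq> (\<lambda>(K1,K2). K1 \<inter> K2) ` (m1 \<times> m2)" unfolding join_def by auto
    moreover have "finite (m1 \<times> m2)" using P1 P2 unfolding is_partition_def by auto
    ultimately show ?thesis using finite_subset by blast
  qed
  show ?thesis unfolding vc_subgraph_dim_le_def vc_dim_le_def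
  proof (intro allI impI, elim conjE)
    fix S :: "(('w \<times> 'y) \<times> real) set"
    assume finS: "finite S" and sh: "shatters (subgraph ?D ` ?F) S"
    have shE: "\<And>X. X \<subseteq> S \<Longrightarrow> \<exists>f\<in>?F. subgraph ?D f \<inter> S = X"
      using sh unfolding shatters_def by blast
    have SD: "\<And>p. p \<in> S \<Longrightarrow> fst p \<in> ?D"
    proof -
      fix p assume "p \<in> S"
      obtain f where "subgraph ?D f \<inter> S = S" using shE[of S] by blast
      with \<open>p \<in> S\<close> have "p \<in> subgraph ?D f" by blast
      thus "fst p \<in> ?D" unfolding subgraph_def by auto
    qed
    define cell where "cell K = {p \<in> S. fst (fst p) \<in> K}" for K
    have cover: "S \<subseteq> (\<Union>K\<in>?J. cell K)"
    proof
      fix p assume pS: "p \<in> S"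
      have w: "fst (fst p) \<in> space MW" using SD[OF pS] by auto
      obtain K1 where K1: "K1 \<in> m1" "fst (fst p) \<in> K1" using w P1 unfolding is_partition_def by blast
      obtain K2 where K2: "K2 \<in> m2" "fst (fst p) \<in> K2" using w P2 unfolding is_partition_def by blast
      have "K1 \<inter> K2 \<in> ?J" unfolding join_def using K1 K2 by blast
      thus "p \<in> (\<Union>K\<in>?J. cell K)" using K1 K2 pS unfolding cell_def by blast
    qed
    have cellbound: "card (cell K) \<le> 2" if KJ: "K \<in> ?J" for K
    proof (rule ccontr)
      assume "\<not> card (cell K) \<le> 2"
      hence c3: "Suc (Suc (Suc 0)) \<le> card (cell K)" by simp
      obtain K1 K2 where K12: "K = K1 \<inter> K2" "K1 \<in> m1" "K2 \<in> m2" "K \<noteq> {}"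
        using KJ unfolding join_def by blast
      obtain w0 where w0: "w0 \<in> K" using K12 by blast
      have key: "\<exists>a c. \<forall>p\<in>cell K. (p \<in> subgraph ?D f \<longleftrightarrow> snd p < exp (a * T (snd (fst p)) + c))"
        if fF: "f \<in> ?F" for f
      proof -
        obtain \<gamma>1 \<gamma>2 where g: "\<gamma>1 \<in> \<Gamma> m1" "\<gamma>2 \<in> \<Gamma> m2"
          and fdef: "f = (\<lambda>(w, y). rdens \<nu> T u (\<gamma>2 w) y / rdens \<nu> T u (\<gamma>1 w) y)"
          using fF by blast
        define a where "a = u (\<gamma>2 w0) - u (\<gamma>1 w0)"
        define c where "c = logA \<nu> T u (\<gamma>1 w0) - logA \<nu> T u (\<gamma>2 w0)"
        show ?thesis
        proof (intro exI ballI)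
          fix p assume pc: "p \<in> cell K"
          then have pS: "p \<in> S" and pK: "fst (fst p) \<in> K" unfolding cell_def by auto
          have e1: "\<gamma>1 (fst (fst p)) = \<gamma>1 w0" using G1[OF g(1)] K12 pK w0 by blast
          have e2: "\<gamma>2 (fst (fst p)) = \<gamma>2 w0" using G2[OF g(2)] K12 pK w0 by blast
          have fv: "f (fst p) = exp (a * T (snd (fst p)) + c)"
proof -
            let ?y = "snd (fst p)"
            have "f (fst p) = exp (u (\<gamma>2 w0) * T ?y - logA \<nu> T u (\<gamma>2 w0)) / exp (u (\<gamma>1 w0) * T ?y - logA \<nu> T u (\<gamma>1 w0))"
              by (simp add: fdef case_prod_beta rdens_def e1 e2)
            also have "\<dots> = exp ((u (\<gamma>2 w0) * T ?y - logA \<nu> T u (\<gamma>2 w0)) - (u (\<gamma>1 w0) * T ?y - logA \<nu> T u (\<gamma>1 w0)))"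
              by (rule exp_diff[symmetric])
            also have "\<dots> = exp (a * T ?y + c)"
              unfolding a_def c_def by (rule arg_cong[where f=exp]) (simp add: algebra_simps)
            finally show ?thesis .
          qed
          show "p \<in> subgraph ?D f \<longleftrightarrow> snd p < exp (a * T (snd (fst p)) + c)"
            proof -
            have "p \<in> subgraph ?D f \<longleftrightarrow> fst p \<in> ?D \<and> snd p < f (fst p)"
              unfolding subgraph_def by (simp add: case_prod_beta)
            then show ?thesis using SD[OF pS] fv by simp
          qed
        qed
      qed
      have tpos: "snd p > 0" if pc: "p \<in> cell K" for p
      proof -
        obtain f where fF: "f \<in> ?F" and "subgraph ?D f \<inter> S = {}" using shE[of "{}"] by blast
        moreover have "p \<in> S" using pc unfolding cell_def by auto
        ultimately have "p \<notin> subgraph ?D f" by blast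
        moreover obtain a c where "\<forall>p\<in>cell K. (p \<in> subgraph ?D f \<longleftrightarrow> snd p < exp (a * T (snd (fst p)) + c))"
          using key[OF fF] by blast
        ultimately have "\<not> snd p < exp (a * T (snd (fst p)) + c)" using pc by blast
        moreover have "exp (a * T (snd (fst p)) + c) > 0" by simp
        ultimately show ?thesis by linarith
      qed
      obtain p1 p2 p3 where pin: "p1 \<in> cell K" "p2 \<in> cell K" "p3 \<in> cell K"
        and dist: "p1 \<noteq> p2" "p1 \<noteq> p3" "p2 \<noteq> p3"
        using three_elems[of "cell K"] c3 by (metis numeral_3_eq_3)
      show False
      proof (rule three_pts[of "ln (snd p1)" "T (snd (fst p1))" "ln (snd p2)" "T (snd (fst p2))"
                              "ln (snd p3)" "T (snd (fst p3))"])
        fix b1 b2 b3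
        let ?X = "{p. (p = p1 \<and> b1) \<or> (p = p2 \<and> b2) \<or> (p = p3 \<and> b3)}"
        have XS: "?X \<subseteq> S" using pin unfolding cell_def by auto
        obtain f where fF: "f \<in> ?F" and fX: "subgraph ?D f \<inter> S = ?X" using shE[OF XS] by (elim bexE)
        obtain a c where ac: "\<forall>p\<in>cell K. (p \<in> subgraph ?D f \<longleftrightarrow> snd p < exp (a * T (snd (fst p)) + c))"
          using key[OF fF] by blast
        have mem: "p \<in> subgraph ?D f \<longleftrightarrow> p \<in> ?X" if "p \<in> cell K" for p
        proof -
          have "p \<in> S" using that unfolding cell_def by simp
          then have "p \<in> subgraph ?D f \<longleftrightarrow> p \<in> subgraph ?D f \<inter> S" by simp
          then show ?thesis by (simp only: fX)
        qed
        have lnc: "ln (snd p) < a * T (snd (fst p)) + c \<longleftrightarrow> p \<in> ?X" if pc: "p \<in> cell K" for p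
        proof -
          have "ln (snd p) < a * T (snd (fst p)) + c \<longleftrightarrow> ln (snd p) < ln (exp (a * T (snd (fst p)) + c))"
            by simp
          also have "\<dots> \<longleftrightarrow> snd p < exp (a * T (snd (fst p)) + c)" using tpos[OF pc] by (intro ln_less_cancel_iff) simp_all
          also have "\<dots> \<longleftrightarrow> p \<in> ?X" using ac mem[OF pc] pc by (simp only: Ball_def)
          finally show ?thesis .
        qed
        show "\<exists>a c. (ln (snd p1) < a * T (snd (fst p1)) + c \<longleftrightarrow> b1) \<and>
                     (ln (snd p2) < a * T (snd (fst p2)) + c \<longleftrightarrow> b2) \<and>
                     (ln (snd p3) < a * T (snd (fst p3)) + c \<longleftrightarrow> b3)"
        proof -
          have x1: "p1 \<in> ?X \<longleftrightarrow> b1" using dist by simp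
          have x2: "p2 \<in> ?X \<longleftrightarrow> b2" using dist by auto
          have x3: "p3 \<in> ?X \<longleftrightarrow> b3" using dist by auto
          show ?thesis
            by (intro exI[of _ a] exI[of _ c]) (simp only: lnc[OF pin(1)] lnc[OF pin(2)] lnc[OF pin(3)] x1 x2 x3)
        qed
      qed
    qed
    have "card S \<le> card (\<Union>K\<in>?J. cell K)"
      using cover finJ by (intro card_mono) (auto simp: cell_def finS)
    also have "\<dots> \<le> (\<Sum>K\<in>?J. card (cell K))" using finJ by (rule card_UN_le)
    also have "\<dots> \<le> (\<Sum>K\<in>?J. 2)" using cellbound by (intro sum_mono) auto
    also have "\<dots> = 2 * card ?J" by simp
    finally show "card S \<le> 2 * card ?J + 1" by simp
  qed
qed

end
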